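(* Let $(X,\mathbb{A},d)$ be a complete $C^*$-algebra valued metric space, where $\mathbb{A}$ is a unital $C^*$-algebra, and let $T:X\to X$ be a $C^*$-algebra valued Ćirić-type1 contractive mapping, i.e. for every $x,y\in X$ there is $q(x,y)\in\mathbb{A}$ with $0\le \|q(x,y)\|<1$, and there is a mapping $\delta:X\times X\to\mathbb{A}_+$, such that $$d(T^n x,T^n y)\preceq (q(x,y)^* )^n\,\delta(x,y)\,q(x,y)^n\quad\text{for all }x,y\in X,\ n\in\mathbb{N}.$$ Then $T$ is orbitally continuous on $X$ if and only if $T$ has a unique fixed point in $X$.
   Context: $\mathbb{A}$ denotes a unital $C^*$-algebra with unit $I$ and zero $\theta$. An element $a\in\mathbb{A}$ is positive, written $a\succeq\theta$, if $a^*=a$ and its spectrum is contained in $[0,\infty)$; $\mathbb{A}_+$ is the set of positive elements, and $a\succeq b$ means $a-b\succeq\theta$. A $C^*$-algebra valued metric space $(X,\mathbb{A},d)$ is a nonempty set $X$ with $d:X\times X\to\mathbb{A}$ such that for all $x,y,z\in X$: $d(x,y)\succeq\theta$, with $d(x,y)=\theta$ iff $x=y$; $d(x,y)=d(y,x)$; $d(x,y)\preceq d(x,z)+d(z,y)$. A sequence $\{x_n\}$ converges to $x$ if $\|d(x_n,x)\|\to0$, and is Cauchy if $\|d(x_n,x_m)\|\to0$ as $n,m\to\infty$; the space is complete if every Cauchy sequence converges to a point of $X$. A self-map $T$ of $X$ is orbitally continuous at $u\in X$ if for every $x\in X$ and every increasing sequence of positive integers $\{n_i\}$, $\|d(T^{n_i}x,u)\|\to0$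 implies $\|d(T^{n_i+1}x,Tu)\|\to0$ as $i\to\infty$; $T$ is orbitally continuous on $X$ if it is orbitally continuous at every $u\in X$. *)

theory Defs
  imports "HOL-Analysis.Analysis"
begin

class unital_cstar_algebra = real_normed_algebra_1 + banach +
  fixes scaleC :: "complex \<Rightarrow> 'a \<Rightarrow> 'a"
    and adj :: "'a \<Rightarrow> 'a"
  assumes scaleC_add_right: "scaleC c (a + b) = scaleC c a + scaleC c b"
    and scaleC_add_left: "scaleC (c + e) a = scaleC c a + scaleC e a"
    and scaleC_scaleC: "scaleC c (scaleC e a) = scaleC (c * e) a"
    and scaleC_of_real: "scaleC (complex_of_real r) a = scaleR r a"
    and scaleC_mult_left: "scaleC c a * b = scaleC c (a * b)"
    and scaleC_mult_right: "a * scaleC c b = scaleC c (a * b)"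
    and norm_scaleC: "norm (scaleC c a) = cmod c * norm a"
    and adj_adj: "adj (adj a) = a"
    and adj_add: "adj (a + b) = adj a + adj b"
    and adj_scaleC: "adj (scaleC c a) = scaleC (cnj c) (adj a)"
    and adj_mult: "adj (a * b) = adj b * adj a"
    and cstar_identity: "norm (adj a * a) = norm a ^ 2"

definition invertible_elem :: "'a::ring_1 \<Rightarrow> bool" where
  "invertible_elem a \<longleftrightarrow> (\<exists>b. a * b = 1 \<and> b * a = 1)"

definition cspectrum :: "'a::unital_cstar_algebra \<Rightarrow> complex set" where
  "cspectrum a = {z. \<not> invertible_elem (a - scaleC z 1)}"

definition cpositive :: "'a::unital_cstar_algebra \<Rightarrow> bool" where
  "cpositive a \<longleftrightarrow> adj a = a \<and> cspectrum a \<subseteq> complex_of_real ` {0..}"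

definition cle :: "'a::unital_cstar_algebra \<Rightarrow> 'a \<Rightarrow> bool" (infix "\<preceq>\<^sub>C" 50) where
  "a \<preceq>\<^sub>C b \<longleftrightarrow> cpositive (b - a)"

definition cstar_metric :: "('x \<Rightarrow> 'x \<Rightarrow> 'a::unital_cstar_algebra) \<Rightarrow> bool" where
  "cstar_metric d \<longleftrightarrow>
     (\<forall>x y. cpositive (d x y) \<and> (d x y = 0 \<longleftrightarrow> x = y)) \<and>
     (\<forall>x y. d x y = d y x) \<and>
     (\<forall>x y z. d x y \<preceq>\<^sub>C d x z + d z y)"

definition cconverges :: "('x \<Rightarrow> 'x \<Rightarrow> 'a::unital_cstar_algebra) \<Rightarrow> (nat \<Rightarrow> 'x) \<Rightarrow> 'x \<Rightarrow> bool" where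
  "cconverges d s x \<longleftrightarrow> (\<lambda>n. norm (d (s n) x)) \<longlonglongrightarrow> 0"

definition ccauchy :: "('x \<Rightarrow> 'x \<Rightarrow> 'a::unital_cstar_algebra) \<Rightarrow> (nat \<Rightarrow> 'x) \<Rightarrow> bool" where
  "ccauchy d s \<longleftrightarrow> (\<forall>e>0. \<exists>N. \<forall>n\<ge>N. \<forall>m\<ge>N. norm (d (s n) (s m)) < e)"

definition ccomplete :: "('x \<Rightarrow> 'x \<Rightarrow> 'a::unital_cstar_algebra) \<Rightarrow> bool" where
  "ccomplete d \<longleftrightarrow> (\<forall>s. ccauchy d s \<longrightarrow> (\<exists>x. cconverges d s x))"

definition orbitally_continuous_at ::
    "('x \<Rightarrow> 'x \<Rightarrow> 'a::unital_cstar_algebra) \<Rightarrow> ('x \<Rightarrow> 'x) \<Rightarrow> 'x \<Rightarrow> bool" where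
  "orbitally_continuous_at d T u \<longleftrightarrow>
     (\<forall>x (ns::nat \<Rightarrow> nat). strict_mono ns \<longrightarrow>
        cconverges d (\<lambda>i. (T ^^ ns i) x) u \<longrightarrow>
        cconverges d (\<lambda>i. (T ^^ (ns i + 1)) x) (T u))"

definition orbitally_continuous ::
    "('x \<Rightarrow> 'x \<Rightarrow> 'a::unital_cstar_algebra) \<Rightarrow> ('x \<Rightarrow> 'x) \<Rightarrow> bool" where
  "orbitally_continuous d T \<longleftrightarrow> (\<forall>u. orbitally_continuous_at d T u)"

end

theory Submission
  imports Defs
begin


lemma scaleC_zero_right[simp]: "scaleC c (0::'a::unital_cstar_algebra) = 0"
  using scaleC_add_right[of c "0::'a" 0] by simp
lemma scaleC_zero_left[simp]: "scaleC 0 (a::'a::unital_cstar_algebra) = 0"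
  using scaleC_add_left[of 0 0 a] by simp
lemma scaleC_one_left[simp]: "scaleC 1 (a::'a::unital_cstar_algebra) = a"
  using scaleC_of_real[of 1 a] by simp
lemma scaleC_minus_left: "scaleC (-c) (a::'a::unital_cstar_algebra) = - scaleC c a"
proof -
  have "scaleC c a + scaleC (-c) a = 0" using scaleC_add_left[of c "-c" a] by simp
  from minus_unique[OF this] show ?thesis by simp
qed
lemma scaleC_minus_right: "scaleC c (- a::'a::unital_cstar_algebra) = - scaleC c a"
proof -
  have "scaleC c a + scaleC c (-a) = 0" using scaleC_add_right[of c a "-a"] by simp
  from minus_unique[OF this] show ?thesis by simp
qed
lemma scaleC_diff_left: "scaleC (c - e) (a::'a::unital_cstar_algebra) = scaleC c a - scaleC e a"
  using scaleC_add_left[of c "-e" a] by (simp add: scaleC_minus_left)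
lemma scaleC_diff_right: "scaleC c (a - b::'a::unital_cstar_algebra) = scaleC c a - scaleC c b"
  using scaleC_add_right[of c a "-b"] by (simp add: scaleC_minus_right)
lemma scaleC_power: "(scaleC c (a::'a::unital_cstar_algebra)) ^ n = scaleC (c^n) (a^n)"
  by (induction n) (auto simp: scaleC_mult_left scaleC_mult_right scaleC_scaleC mult.commute)

lemma adj_zero[simp]: "adj (0::'a::unital_cstar_algebra) = 0"
  using adj_add[of "0::'a" 0] by simp
lemma adj_one[simp]: "adj (1::'a::unital_cstar_algebra) = 1"
proof -
  have "adj (adj 1 * (1::'a)) = adj 1 * adj (adj 1)" by (rule adj_mult)
  then show ?thesis by (simp add: adj_adj)
qed
lemma adj_minus: "adj (- a::'a::unital_cstar_algebra) = - adj a"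
proof -
  have "adj a + adj (-a) = 0" using adj_add[of a "-a"] by simp
  from minus_unique[OF this] show ?thesis by simp
qed
lemma adj_diff: "adj (a - b::'a::unital_cstar_algebra) = adj a - adj b"
  using adj_add[of a "-b"] by (simp add: adj_minus)
lemma adj_scaleR: "adj (scaleR r a::'a::unital_cstar_algebra) = scaleR r (adj a)"
  using adj_scaleC[of "complex_of_real r" a] by (simp add: scaleC_of_real)
lemma adj_power: "adj ((a::'a::unital_cstar_algebra) ^ n) = (adj a) ^ n"
  by (induction n) (auto simp: adj_mult power_commutes)
lemma norm_adj: "norm (adj (a::'a::unital_cstar_algebra)) = norm a"
proof -
  have le: "norm b \<le> norm (adj b)" for b :: 'a
  proof (cases "norm b = 0")
    case False
    have "norm b ^ 2 \<le> norm (adj b) * norm b"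
      using cstar_identity[of b] norm_mult_ineq[of "adj b" b] by simp
    then show ?thesis using False by (simp add: power2_eq_square)
  qed simp
  show ?thesis using le[of a] le[of "adj a"] by (simp add: adj_adj)
qed

definition cinv :: "'a::ring_1 \<Rightarrow> 'a" where
  "cinv a = (SOME b. a * b = 1 \<and> b * a = 1)"

lemma cinv: "invertible_elem a \<Longrightarrow> a * cinv a = 1 \<and> cinv a * a = 1"
  unfolding invertible_elem_def cinv_def by (rule someI_ex)

lemma cinv_eq: "a * b = 1 \<Longrightarrow> b * a = 1 \<Longrightarrow> cinv a = b"
proof -
  assume h: "a * b = 1" "b * a = 1"
  then have i: "invertible_elem a" unfolding invertible_elem_def by blast
  have "cinv a = (b * a) * cinv a" using h by simp
  also have "\<dots> = b" using cinv[OF i] by (simp add: mult.assoc)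
  finally show ?thesis .
qed

lemma invertibleI: "a * b = 1 \<Longrightarrow> b * a = 1 \<Longrightarrow> invertible_elem a"
  unfolding invertible_elem_def by blast

lemma invertible_mult: "invertible_elem a \<Longrightarrow> invertible_elem b \<Longrightarrow> invertible_elem (a * b)"
proof -
  assume a: "invertible_elem a" and b: "invertible_elem b"
  show ?thesis
  proof (rule invertibleI[of _ "cinv b * cinv a"])
    have "a * b * (cinv b * cinv a) = a * (b * cinv b) * cinv a" by (simp add: mult.assoc)
    then show "a * b * (cinv b * cinv a) = 1" using cinv[OF a] cinv[OF b] by simp
    have "cinv b * cinv a * (a * b) = cinv b * (cinv a * a) * b" by (simp add: mult.assoc)
    then show "cinv b * cinv a * (a * b) = 1" using cinv[OF a] cinv[OF b] by simp
  qed
qed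

lemma invertible_minus: "invertible_elem (- a) \<longleftrightarrow> invertible_elem a"
  unfolding invertible_elem_def by (metis minus_minus mult_minus_left mult_minus_right)

lemma invertible_scaleC: "c \<noteq> 0 \<Longrightarrow> invertible_elem a \<Longrightarrow> invertible_elem (scaleC c (a::'a::unital_cstar_algebra))"
proof -
  assume c: "c \<noteq> 0" and a: "invertible_elem a"
  show ?thesis
    apply (rule invertibleI[of _ "scaleC (1/c) (cinv a)"])
    using c cinv[OF a] by (simp_all add: scaleC_mult_left scaleC_mult_right scaleC_scaleC)
qed

lemma one_minus_sum: "(1 - y) * (\<Sum>i<n. y ^ i) = 1 - (y::'a::ring_1) ^ n"
proof (induction n)
  case (Suc n)
  have "(1 - y) * (\<Sum>i<Suc n. y ^ i) = (1 - y) * (\<Sum>i<n. y ^ i) + (1 - y) * y ^ n"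
    by (simp add: distrib_left)
  also have "\<dots> = 1 - y ^ Suc n" using Suc by (simp add: algebra_simps)
  finally show ?case .
qed simp
lemma sum_one_minus: "(\<Sum>i<n. y ^ i) * (1 - y) = 1 - (y::'a::ring_1) ^ n"
proof (induction n)
  case (Suc n)
  have "(\<Sum>i<Suc n. y ^ i) * (1 - y) = (\<Sum>i<n. y ^ i) * (1 - y) + y ^ n * (1 - y)"
    by (simp add: distrib_right)
  also have "\<dots> = 1 - y ^ Suc n" using Suc by (simp add: algebra_simps power_commutes)
  finally show ?case .
qed simp

lemma neumann:
  fixes y :: "'a::unital_cstar_algebra"
  assumes y: "norm y < 1"
  shows "invertible_elem (1 - y) \<and> norm (cinv (1 - y) - 1) \<le> norm y / (1 - norm y)"
proof -
  have sg: "summable (\<lambda>n. norm y ^ n)" using y by (simp add: summable_geometric)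
  have le: "norm (y ^ n) \<le> norm y ^ n" for n by (rule norm_power_ineq)
  have sn: "summable (\<lambda>n. norm (y ^ n))"
    by (rule summable_comparison_test[OF _ sg]) (use le in auto)
  have s: "summable (\<lambda>n. y ^ n)" using sn by (rule summable_norm_cancel)
  define S where "S = (\<Sum>n. y ^ n)"
  have P: "(\<lambda>n. \<Sum>i<n. y ^ i) \<longlonglongrightarrow> S" unfolding S_def using s by (rule summable_LIMSEQ)
  have y0: "(\<lambda>n. y ^ n) \<longlonglongrightarrow> 0"
    using summable_LIMSEQ_zero[OF s] .
  have L1: "(\<lambda>n. (1 - y) * (\<Sum>i<n. y ^ i)) \<longlonglongrightarrow> (1 - y) * S"
    by (intro tendsto_intros P)
  moreover have "(\<lambda>n. (1 - y) * (\<Sum>i<n. y ^ i)) \<longlonglongrightarrow> 1"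
    unfolding one_minus_sum using tendsto_diff[OF tendsto_const y0, of 1] by simp
  ultimately have e1: "(1 - y) * S = 1" by (rule LIMSEQ_unique)
  have L2: "(\<lambda>n. (\<Sum>i<n. y ^ i) * (1 - y)) \<longlonglongrightarrow> S * (1 - y)"
    by (intro tendsto_intros P)
  moreover have "(\<lambda>n. (\<Sum>i<n. y ^ i) * (1 - y)) \<longlonglongrightarrow> 1"
    unfolding sum_one_minus using tendsto_diff[OF tendsto_const y0, of 1] by simp
  ultimately have e2: "S * (1 - y) = 1" by (rule LIMSEQ_unique)
  have inv: "invertible_elem (1 - y)" using e1 e2 by (rule invertibleI)
  have cS: "cinv (1 - y) = S" using e1 e2 by (rule cinv_eq)
  have "S - 1 = (\<Sum>n. y ^ Suc n)" unfolding S_def using suminf_split_head[OF s] by simp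
  also have "norm \<dots> \<le> (\<Sum>n. norm (y ^ Suc n))"
    by (rule summable_norm) (use summable_Suc_iff[of "\<lambda>n. norm (y^n)"] sn in simp)
  also have "\<dots> \<le> (\<Sum>n. norm y ^ Suc n)"
  proof (rule suminf_le)
    show "\<And>n. norm (y ^ Suc n) \<le> norm y ^ Suc n" using le by blast
    show "summable (\<lambda>n. norm (y ^ Suc n))" using summable_Suc_iff[of "\<lambda>n. norm (y^n)"] sn by simp
    show "summable (\<lambda>n. norm y ^ Suc n)" using summable_Suc_iff[of "\<lambda>n. norm y^n"] sg by simp
  qed
  also have "\<dots> = norm y * (\<Sum>n. norm y ^ n)"
    using suminf_mult[OF sg, of "norm y"] by simp
  also have "\<dots> = norm y / (1 - norm y)"
    using suminf_geometric[of "norm y"] y by simp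
  finally show ?thesis using inv cS by simp
qed


lemma aux_div: fixes t::real assumes "0 \<le> t" "t \<le> 1/2" shows "t/(1-t) \<le> 2*t"
proof -
  have "t*(1 - 2*t) \<ge> 0" using assms by simp
  then have "t \<le> 2*t*(1-t)" by (simp add: algebra_simps)
  then show ?thesis using assms by (simp add: pos_divide_le_eq)
qed

lemma perturb:
  fixes a e :: "'a::unital_cstar_algebra"
  assumes a: "invertible_elem a" and small: "norm (cinv a) * norm e \<le> 1/2"
  shows "invertible_elem (a - e) \<and> norm (cinv (a - e) - cinv a) \<le> 2 * norm (cinv a) ^ 2 * norm e"
proof -
  define b where "b = cinv a"
  have ab: "a * b = 1" "b * a = 1" using cinv[OF a] b_def by auto
  have nbe: "norm (b * e) \<le> 1/2" using norm_mult_ineq[of b e] small unfolding b_def by linarith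
  obtain N where N: "invertible_elem (1 - b * e)" and Nb: "norm (cinv (1 - b*e) - 1) \<le> norm (b*e) / (1 - norm (b*e))"
    using neumann[of "b*e"] nbe by auto
  define w where "w = cinv (1 - b*e)"
  have w: "(1 - b*e) * w = 1" "w * (1 - b*e) = 1" using cinv[OF N] w_def by auto
  have ae: "a - e = a * (1 - b * e)" using ab by (simp add: algebra_simps mult.assoc[symmetric])
  have i1: "(a - e) * (w * b) = 1"
    unfolding ae by (metis ab(1) mult.assoc mult_1_left w(1))
  have i2: "(w * b) * (a - e) = 1"
    unfolding ae by (metis ab(2) mult.assoc mult_1_left w(2))
  have inv: "invertible_elem (a - e)" using i1 i2 by (rule invertibleI)
  have c: "cinv (a - e) = w * b" using i1 i2 by (rule cinv_eq)
  have "norm (w - 1) \<le> norm (b*e) / (1 - norm (b*e))" using Nb w_def by simp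
  also have "\<dots> \<le> 2 * norm (b * e)"
    using nbe aux_div[of "norm (b*e)"] by simp
  also have "\<dots> \<le> 2 * (norm b * norm e)" using norm_mult_ineq[of b e] by simp
  finally have wn: "norm (w - 1) \<le> 2 * (norm b * norm e)" .
  have "cinv (a - e) - cinv a = (w - 1) * b" using c b_def by (simp add: algebra_simps)
  then have "norm (cinv (a - e) - cinv a) \<le> norm (w - 1) * norm b" using norm_mult_ineq by metis
  also have "\<dots> \<le> 2 * (norm b * norm e) * norm b" using wn by (simp add: mult_right_mono)
  finally show ?thesis using inv b_def by (simp add: power2_eq_square algebra_simps)
qed


lemma spec_bound:
  fixes a :: "'a::unital_cstar_algebra"
  assumes "z \<in> cspectrum a" shows "cmod z \<le> norm a"
proof (rule ccontr)
  assume "\<not> cmod z \<le> norm a"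
  then have lt: "norm a < cmod z" by simp
  then have z: "z \<noteq> 0" by auto
  have n: "norm (scaleC (1/z) a) < 1"
    using lt z by (simp add: norm_scaleC norm_divide divide_simps)
  have i: "invertible_elem (1 - scaleC (1/z) a)" using neumann[OF n] by simp
  have eq: "a - scaleC z 1 = scaleC (-z) (1 - scaleC (1/z) a)"
    using z by (simp add: scaleC_diff_right scaleC_scaleC scaleC_minus_left)
  have "invertible_elem (a - scaleC z 1)"
    unfolding eq using z i by (intro invertible_scaleC) auto
  then show False using assms unfolding cspectrum_def by simp
qed


lemma scaleC_of_real_one: "scaleC (complex_of_real u) (1::'a::unital_cstar_algebra) = scaleR u 1"
  by (rule scaleC_of_real)


lemma spec_shift:
  fixes a :: "'a::unital_cstar_algebra"
  shows "z \<in> cspectrum (scaleR u 1 - a) \<longleftrightarrow> complex_of_real u - z \<in> cspectrum a"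
proof -
  have "scaleR u 1 - a - scaleC z 1 = - (a - scaleC (complex_of_real u - z) 1)"
    by (simp add: scaleC_diff_left scaleC_of_real)
  then show ?thesis unfolding cspectrum_def using invertible_minus by (metis mem_Collect_eq)
qed


lemma spec_add:
  fixes h :: "'a::unital_cstar_algebra"
  assumes "z \<in> cspectrum h" shows "z + w \<in> cspectrum (h + scaleC w 1)"
proof -
  have eq: "h + scaleC w 1 - scaleC (z + w) 1 = h - scaleC z 1"
    by (simp add: scaleC_add_left algebra_simps)
  have "\<not> invertible_elem (h + scaleC w 1 - scaleC (z + w) 1)" using assms unfolding cspectrum_def eq by simp
  then show ?thesis unfolding cspectrum_def by blast
qed


lemma spec_real:
  fixes h :: "'a::unital_cstar_algebra"
  assumes sa: "adj h = h" and z: "z \<in> cspectrum h"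
  shows "Im z = 0"
proof (rule ccontr)
  assume nz: "Im z \<noteq> 0"
  have key: "Re z ^ 2 + (Im z + t) ^ 2 \<le> norm h ^ 2 + t ^ 2" for t :: real
  proof -
    define c where "c = scaleC (\<i> * complex_of_real t) (1::'a)"
    have "z + \<i> * complex_of_real t \<in> cspectrum (h + c)"
      unfolding c_def by (rule spec_add[OF z])
    then have "cmod (z + \<i> * complex_of_real t) \<le> norm (h + c)" by (rule spec_bound)
    then have 1: "cmod (z + \<i> * complex_of_real t) ^ 2 \<le> norm (h + c) ^ 2"
      by (simp add: power_mono)
    have ac: "adj c = - c" unfolding c_def
      by (simp add: adj_scaleC scaleC_minus_left)
    have hc: "h * c = c * h" unfolding c_def by (simp add: scaleC_mult_left scaleC_mult_right)
    have cc: "c * c = scaleR (- (t^2)) 1"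
    proof -
      have "c * c = scaleC ((\<i> * complex_of_real t) * (\<i> * complex_of_real t)) 1"
        unfolding c_def by (simp add: scaleC_mult_left scaleC_mult_right scaleC_scaleC)
      also have "(\<i> * complex_of_real t) * (\<i> * complex_of_real t) = complex_of_real (- (t^2))"
        by (simp add: power2_eq_square algebra_simps)
      finally show ?thesis by (simp only: scaleC_of_real)
    qed
    have "adj (h + c) * (h + c) = (h - c) * (h + c)" by (simp add: adj_add sa ac)
    also have "\<dots> = h * h + scaleR (t^2) 1" using hc cc by (simp add: algebra_simps)
    finally have "norm (h + c) ^ 2 = norm (h * h + scaleR (t^2) 1)"
      using cstar_identity[of "h + c"] by simp
    also have "\<dots> \<le> norm (h * h) + t^2" using norm_triangle_ineq[of "h*h" "scaleR (t^2) (1::'a)"] by simp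
    also have "\<dots> \<le> norm h ^ 2 + t^2" using norm_mult_ineq[of h h] by (simp add: power2_eq_square)
    finally have 2: "norm (h + c) ^ 2 \<le> norm h ^ 2 + t ^ 2" .
    have "cmod (z + \<i> * complex_of_real t) ^ 2 = Re z ^ 2 + (Im z + t) ^ 2"
      by (simp add: cmod_power2)
    then show ?thesis using 1 2 by linarith
  qed
  define t where "t = (norm h ^ 2 + 1) / (2 * Im z)"
  have "Re z ^ 2 + Im z ^ 2 + 2 * Im z * t \<le> norm h ^ 2"
    using key[of t] by (simp add: power2_eq_square algebra_simps)
  moreover have "2 * Im z * t = norm h ^ 2 + 1" unfolding t_def using nz by simp
  ultimately show False by (smt (verit) zero_le_power2)
qed


lemma norm_pow2:
  fixes h :: "'a::unital_cstar_algebra"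
  assumes sa: "adj h = h"
  shows "norm (h ^ (2 ^ k)) = norm h ^ (2 ^ k)"
proof (induction k)
  case (Suc k)
  define y where "y = h ^ (2^k)"
  have ya: "adj y = y" unfolding y_def by (simp add: adj_power sa)
  have "h ^ (2 ^ Suc k) = y * y" unfolding y_def by (simp add: power_add[symmetric] mult_2)
  then have "h ^ (2 ^ Suc k) = adj y * y" using ya by simp
  then have "norm (h ^ (2 ^ Suc k)) = norm y ^ 2" using cstar_identity[of y] by simp
  then show ?case using Suc y_def by (simp add: power_mult[symmetric] mult.commute)
qed simp


lemma half_avg:
  fixes y :: "'a::unital_cstar_algebra"
  assumes i1: "invertible_elem (1 - scaleC \<nu> y)" and i2: "invertible_elem (1 - scaleC (-\<nu>) y)"
  shows "invertible_elem (1 - scaleC (\<nu>^2) (y^2)) \<and>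
     cinv (1 - scaleC (\<nu>^2) (y^2)) = scaleR (1/2) (cinv (1 - scaleC \<nu> y) + cinv (1 - scaleC (-\<nu>) y))"
proof -
  define p where "p = scaleC \<nu> y"
  have m: "scaleC (-\<nu>) y = - p" unfolding p_def by (simp add: scaleC_minus_left)
  have pp: "scaleC (\<nu>^2) (y^2) = p * p" unfolding p_def
    by (simp add: scaleC_mult_left scaleC_mult_right scaleC_scaleC power2_eq_square)
  define A where "A = 1 - p"
  define B where "B = 1 + p"
  have iA: "invertible_elem A" using i1 A_def p_def by simp
  have iB: "invertible_elem B" using i2 B_def m by simp
  have AB: "1 - p * p = A * B" "1 - p * p = B * A" unfolding A_def B_def by (simp_all add: algebra_simps)
  define a' where "a' = cinv A"
  define b' where "b' = cinv B"
  have a': "A * a' = 1" "a' * A = 1" using cinv[OF iA] a'_def by auto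
  have b': "B * b' = 1" "b' * B = 1" using cinv[OF iB] b'_def by auto
  have e1: "(1 - p*p) * a' = B" unfolding AB(2) by (metis a'(1) mult.assoc mult.right_neutral)
  have e2: "(1 - p*p) * b' = A" unfolding AB(1) by (metis b'(1) mult.assoc mult.right_neutral)
  have e3: "a' * (1 - p*p) = B" unfolding AB(1) by (metis a'(2) mult.assoc mult_1_left)
  have e4: "b' * (1 - p*p) = A" unfolding AB(2) by (metis b'(2) mult.assoc mult_1_left)
  have AB2: "A + B = scaleR 2 1" unfolding A_def B_def by (simp add: scaleR_2)
  have r1: "(1 - p*p) * scaleR (1/2) (a' + b') = 1"
    by (simp add: distrib_left e1 e2 AB2 add.commute[of B])
  have r2: "scaleR (1/2) (a' + b') * (1 - p*p) = 1"
    by (simp add: distrib_right e3 e4 AB2 add.commute[of B])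
  show ?thesis unfolding pp using r1 r2 invertibleI cinv_eq
    by (metis A_def B_def a'_def b'_def m p_def diff_minus_eq_add)
qed



lemma aux2: fixes c r k :: real
  assumes "0 \<le> c" "0 \<le> r" "r < k/(c+1)" "0 < k" shows "c * r < k"
proof -
  have "c * r \<le> c * (k/(c+1))" using assms by (intro mult_left_mono) auto
  also have "\<dots> < k" using assms by (simp add: field_simps)
  finally show ?thesis .
qed

lemma inv_cont:
  fixes x :: "'a::unital_cstar_algebra"
  assumes inv: "\<And>\<mu>. cmod \<mu> \<le> R \<Longrightarrow> invertible_elem (1 - scaleC \<mu> x)"
  shows "continuous_on (cball 0 R) (\<lambda>\<mu>. cinv (1 - scaleC \<mu> x))"
  unfolding continuous_on_iff
proof (intro ballI allI impI)
  fix \<mu>0 :: complex and \<epsilon> :: real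
  assume m0: "\<mu>0 \<in> cball 0 R" and e: "0 < \<epsilon>"
  define a where "a = 1 - scaleC \<mu>0 x"
  have ia: "invertible_elem a" using inv m0 a_def by simp
  define B where "B = norm (cinv a)"
  define X where "X = norm x"
  have B0: "0 \<le> B" "0 \<le> X" using B_def X_def by auto
  define d where "d = min ((1/2)/(B*X+1)) ((\<epsilon>/2)/(B*B*X+1))"
  have dpos: "0 < d" unfolding d_def using B0 e by (simp add: add_nonneg_pos)
  show "\<exists>d>0. \<forall>x'\<in>cball 0 R. dist x' \<mu>0 < d \<longrightarrow>
          dist (cinv (1 - scaleC x' x)) (cinv (1 - scaleC \<mu>0 x)) < \<epsilon>"
  proof (intro exI[of _ d] conjI ballI impI dpos)
    fix \<mu> assume "\<mu> \<in> cball 0 R" and dm: "dist \<mu> \<mu>0 < d"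
    define r where "r = cmod (\<mu> - \<mu>0)"
    have r0: "0 \<le> r" and rd: "r < d" using dm r_def by (auto simp: dist_norm)
    define e where "e = scaleC (\<mu> - \<mu>0) x"
    have ne: "norm e = r * X" unfolding e_def r_def X_def by (simp add: norm_scaleC)
    have ae: "a - e = 1 - scaleC \<mu> x" unfolding a_def e_def by (simp add: scaleC_diff_left)
    have r1: "r < (1/2)/(B*X+1)" using rd unfolding d_def by simp
    have r2: "r < (\<epsilon>/2)/(B*B*X+1)" using rd unfolding d_def by simp
    have s1: "(B*X) * r < 1/2" by (rule aux2) (use B0 r0 r1 in auto)
    have s2: "(B*B*X) * r < \<epsilon>/2" by (rule aux2) (use B0 r0 r2 e in auto)
    have sm: "norm (cinv a) * norm e \<le> 1/2" using s1 ne B_def by (simp add: algebra_simps)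
    have "norm (cinv (a - e) - cinv a) \<le> 2 * norm (cinv a) ^ 2 * norm e"
      using perturb[OF ia sm] by simp
    also have "\<dots> = 2 * ((B*B*X) * r)" using ne B_def by (simp add: power2_eq_square algebra_simps)
    also have "\<dots> < \<epsilon>" using s2 by simp
    finally have "norm (cinv (a - e) - cinv a) < \<epsilon>" .
    then show "dist (cinv (1 - scaleC \<mu> x)) (cinv (1 - scaleC \<mu>0 x)) < \<epsilon>"
      unfolding dist_norm ae[symmetric] a_def[symmetric] .
  qed
qed

lemma inv_ucont:
  fixes x :: "'a::unital_cstar_algebra"
  assumes inv: "\<And>\<mu>. cmod \<mu> \<le> R \<Longrightarrow> invertible_elem (1 - scaleC \<mu> x)"
  shows "\<exists>\<delta>>0. \<forall>\<mu> \<mu>'. cmod \<mu> \<le> R \<longrightarrow> cmod \<mu>' \<le> R \<longrightarrow> cmod (\<mu> - \<mu>') < \<delta> \<longrightarrow>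
           norm (cinv (1 - scaleC \<mu> x) - cinv (1 - scaleC \<mu>' x)) < 1/2"
proof -
  have "uniformly_continuous_on (cball 0 R) (\<lambda>\<mu>. cinv (1 - scaleC \<mu> x))"
    by (intro compact_uniformly_continuous inv_cont) (auto intro: inv compact_cball)
  then obtain d where d: "d > 0" and
    H: "\<And>u u'. u \<in> cball 0 R \<Longrightarrow> u' \<in> cball 0 R \<Longrightarrow> dist u' u < d \<Longrightarrow>
          dist (cinv (1 - scaleC u' x)) (cinv (1 - scaleC u x)) < 1/2"
    unfolding uniformly_continuous_on_def by (metis less_divide_eq_numeral1(1) mult_eq_0_iff zero_less_one not_one_less_zero mult_pos_pos zero_less_numeral)
  show ?thesis
    apply (rule exI[of _ d])
    using d H by (auto simp: dist_norm)
qed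


lemma pw:
  fixes x :: "'a::unital_cstar_algebra"
  assumes inv: "\<And>\<mu>. cmod \<mu> \<le> R \<Longrightarrow> invertible_elem (1 - scaleC \<mu> x)"
    and uc: "\<And>\<mu> \<mu>'. cmod \<mu> \<le> R \<Longrightarrow> cmod \<mu>' \<le> R \<Longrightarrow> cmod (\<mu> - \<mu>') < \<delta> \<Longrightarrow>
           norm (cinv (1 - scaleC \<mu> x) - cinv (1 - scaleC \<mu>' x)) < 1/2"
  shows "\<forall>\<mu>. cmod \<mu> \<le> R \<longrightarrow> invertible_elem (1 - scaleC (\<mu>^(2^k)) (x^(2^k))) \<and>
     (\<forall>\<mu>'. cmod \<mu>' \<le> R \<longrightarrow> cmod (\<mu> - \<mu>') < \<delta> \<longrightarrow>
        norm (cinv (1 - scaleC (\<mu>^(2^k)) (x^(2^k))) - cinv (1 - scaleC (\<mu>'^(2^k)) (x^(2^k)))) < 1/2)"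
proof (induction k)
  case 0
  then show ?case using inv uc by simp
next
  case (Suc k)
  define \<zeta> :: complex where "\<zeta> = cis (pi / 2^(k::nat))"
  have z1: "cmod \<zeta> = 1" unfolding \<zeta>_def by simp
  have zN: "\<zeta> ^ (2^(k::nat)) = (-1::complex)" unfolding \<zeta>_def by (subst Complex.DeMoivre) simp
  define y where "y = x ^ (2^k)"
  have pw2: "(w::complex) ^ (2 ^ Suc k) = (w ^ (2^k))^2" for w by (simp add: power_mult[symmetric] mult.commute)
  have px2: "x ^ (2 ^ Suc k) = y^2" unfolding y_def by (simp add: power_mult[symmetric] mult.commute)
  have rot: "(\<zeta> * w) ^ (2^k) = - (w ^ (2^k))" for w by (simp add: power_mult_distrib zN)
  have rm: "cmod (\<zeta> * w) = cmod w" for w by (simp add: norm_mult z1)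
  have H: "invertible_elem (1 - scaleC ((\<mu>^(2^k))^2) (y^2)) \<and>
     cinv (1 - scaleC ((\<mu>^(2^k))^2) (y^2)) = scaleR (1/2) (cinv (1 - scaleC (\<mu>^(2^k)) y) + cinv (1 - scaleC (-(\<mu>^(2^k))) y))"
    if m: "cmod \<mu> \<le> R" for \<mu>
  proof (rule half_avg)
    show "invertible_elem (1 - scaleC (\<mu> ^ 2 ^ k) y)" using Suc.IH m y_def by blast
    have "invertible_elem (1 - scaleC ((\<zeta>*\<mu>) ^ 2 ^ k) y)" using Suc.IH m rm y_def by metis
    then show "invertible_elem (1 - scaleC (- (\<mu> ^ 2 ^ k)) y)" by (simp add: rot)
  qed
  show ?case
  proof (intro allI impI conjI)
    fix \<mu> assume m: "cmod \<mu> \<le> R"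
    show "invertible_elem (1 - scaleC (\<mu> ^ 2 ^ Suc k) (x ^ 2 ^ Suc k))"
      unfolding pw2 px2 using H[OF m] by blast
    fix \<mu>' assume m': "cmod \<mu>' \<le> R" and d: "cmod (\<mu> - \<mu>') < \<delta>"
    have d': "cmod (\<zeta>*\<mu> - \<zeta>*\<mu>') < \<delta>" using d by (simp add: right_diff_distrib[symmetric] norm_mult z1)
    define a where "a = cinv (1 - scaleC (\<mu> ^ 2 ^ k) y)"
    define b where "b = cinv (1 - scaleC (-(\<mu> ^ 2 ^ k)) y)"
    define a' where "a' = cinv (1 - scaleC (\<mu>' ^ 2 ^ k) y)"
    define b' where "b' = cinv (1 - scaleC (-(\<mu>' ^ 2 ^ k)) y)"
    have na: "norm (a - a') < 1/2" unfolding a_def a'_def y_def using Suc.IH m m' d by blast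
    have "norm (cinv (1 - scaleC ((\<zeta>*\<mu>) ^ 2 ^ k) y) - cinv (1 - scaleC ((\<zeta>*\<mu>') ^ 2 ^ k) y)) < 1/2"
      unfolding y_def using Suc.IH m m' d' rm by metis
    then have nb: "norm (b - b') < 1/2" unfolding b_def b'_def by (simp add: rot)
    have "cinv (1 - scaleC (\<mu> ^ 2 ^ Suc k) (x ^ 2 ^ Suc k)) - cinv (1 - scaleC (\<mu>' ^ 2 ^ Suc k) (x ^ 2 ^ Suc k))
       = scaleR (1/2) ((a - a') + (b - b'))"
      using H[OF m] H[OF m'] unfolding a_def b_def a'_def b'_def pw2 px2
      by (simp add: algebra_simps)
    also have "norm \<dots> \<le> (1/2) * (norm (a - a') + norm (b - b'))"
      using norm_triangle_ineq[of "a - a'" "b - b'"] by simp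
    also have "\<dots> < 1/2" using na nb by simp
    finally show "norm (cinv (1 - scaleC (\<mu> ^ 2 ^ Suc k) (x ^ 2 ^ Suc k)) - cinv (1 - scaleC (\<mu>' ^ 2 ^ Suc k) (x ^ 2 ^ Suc k))) < 1/2" .
  qed
qed


lemma boot:
  fixes h :: "'a::unital_cstar_algebra"
  assumes sa: "adj h = h" and R: "0 < R"
    and inv: "\<And>\<mu>. cmod \<mu> \<le> R \<Longrightarrow> invertible_elem (1 - scaleC \<mu> h)"
  shows "R * norm h \<le> 1"
proof (rule ccontr)
  assume "\<not> R * norm h \<le> 1"
  then have Rh: "1 < R * norm h" by simp
  then have hp: "0 < norm h" using R by (metis mult_eq_0_iff norm_ge_zero not_le order_less_le zero_less_one order.strict_trans)
  obtain \<delta> where dp: "\<delta> > 0" and uc: "\<And>\<mu> \<mu>'. cmod \<mu> \<le> R \<Longrightarrow> cmod \<mu>' \<le> R \<Longrightarrow> cmod (\<mu> - \<mu>') < \<delta> \<Longrightarrow>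
           norm (cinv (1 - scaleC \<mu> h) - cinv (1 - scaleC \<mu>' h)) < 1/2"
    using inv_ucont[OF inv] by blast
  define s0 where "s0 = 1 / norm h"
  have s0R: "s0 < R" using Rh hp unfolding s0_def by (simp add: field_simps)
  have s0p: "0 < s0" using hp s0_def by simp
  define s1 where "s1 = max 0 (s0 - \<delta>/3)"
  define s2 where "s2 = min R (s0 + \<delta>/3)"
  have s1p: "0 \<le> s1" unfolding s1_def by simp
  have s1l: "s1 < s0" unfolding s1_def using dp s0p by simp
  have s2g: "s0 < s2" unfolding s2_def using dp s0R by simp
  have s2R: "s2 \<le> R" unfolding s2_def by simp
  have s12: "s2 - s1 < \<delta>" unfolding s1_def s2_def using dp by auto
  define r1 where "r1 = s1 * norm h"
  define r2 where "r2 = s2 * norm h"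
  have r1: "0 \<le> r1" "r1 < 1" unfolding r1_def using s1p s1l hp s0_def
    by (auto simp: field_simps)
  have r2: "1 < r2" unfolding r2_def using s2g hp s0_def by (simp add: field_simps)
  obtain k1 where k1: "r1 ^ k1 < 1/5" using real_arch_pow_inv[of "1/5" r1] r1 by auto
  obtain k2 where k2: "11 < r2 ^ k2" using real_arch_pow[OF r2] by blast
  define k where "k = k1 + k2"
  define N :: nat where "N = 2 ^ k"
  have kN: "k < N" unfolding N_def by (rule less_exp)
  have a1s: "r1 ^ N < 1/5"
  proof -
    have "r1 ^ N \<le> r1 ^ k1" by (rule power_decreasing) (use kN k_def r1 in auto)
    then show ?thesis using k1 by simp
  qed
  have a2s: "11 < r2 ^ N"
  proof -
    have "r2 ^ k2 \<le> r2 ^ N" by (rule power_increasing) (use kN k_def r2 in auto)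
    then show ?thesis using k2 by simp
  qed
  define \<mu>1 where "\<mu>1 = complex_of_real s1"
  define \<mu>2 where "\<mu>2 = complex_of_real s2"
  have m1: "cmod \<mu>1 \<le> R" unfolding \<mu>1_def using s1p s1l s0R by simp
  have m2: "cmod \<mu>2 \<le> R" unfolding \<mu>2_def using s2g s0p s2R by simp
  have m12: "cmod (\<mu>2 - \<mu>1) < \<delta>" unfolding \<mu>1_def \<mu>2_def
    using s12 s1l s2g by (simp flip: of_real_diff)
  have PW: "\<forall>\<mu>. cmod \<mu> \<le> R \<longrightarrow> invertible_elem (1 - scaleC (\<mu>^N) (h^N)) \<and>
     (\<forall>\<mu>'. cmod \<mu>' \<le> R \<longrightarrow> cmod (\<mu> - \<mu>') < \<delta> \<longrightarrow>
        norm (cinv (1 - scaleC (\<mu>^N) (h^N)) - cinv (1 - scaleC (\<mu>'^N) (h^N))) < 1/2)"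
    unfolding N_def by (rule pw[OF inv uc]) blast+
  define a1 where "a1 = scaleC (\<mu>1^N) (h^N)"
  define a2 where "a2 = scaleC (\<mu>2^N) (h^N)"
  have na1: "norm a1 = r1 ^ N" unfolding a1_def r1_def \<mu>1_def N_def
    using norm_pow2[OF sa, of k] s1p by (simp add: norm_scaleC norm_power power_mult_distrib)
  have na2: "norm a2 = r2 ^ N" unfolding a2_def r2_def \<mu>2_def N_def
    using norm_pow2[OF sa, of k] s2g s0p by (simp add: norm_scaleC norm_power power_mult_distrib)
  have ia2: "invertible_elem (1 - a2)" using PW m2 a2_def by blast
  have d12: "norm (cinv (1 - a2) - cinv (1 - a1)) < 1/2" using PW m1 m2 m12 a1_def a2_def by blast
  have a1n: "norm a1 < 1" using na1 a1s by simp
  have "norm (cinv (1 - a1) - 1) \<le> norm a1 / (1 - norm a1)" using neumann[OF a1n] by simp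
  also have "\<dots> \<le> 2 * norm a1" by (rule aux_div) (use na1 a1s norm_ge_zero[of a1] in auto)
  finally have c1: "norm (cinv (1 - a1) - 1) < 2/5" using na1 a1s by simp
  define w where "w = cinv (1 - a2)"
  have "w - 1 = (cinv (1 - a2) - cinv (1 - a1)) + (cinv (1 - a1) - 1)" unfolding w_def by simp
  then have "norm (w - 1) \<le> norm (cinv (1 - a2) - cinv (1 - a1)) + norm (cinv (1 - a1) - 1)"
    by (metis norm_triangle_ineq)
  then have wn: "norm (1 - w) < 9/10" using d12 c1 by (simp add: norm_minus_commute)
  have "norm (cinv (1 - (1 - w)) - 1) \<le> norm (1 - w) / (1 - norm (1 - w))"
    using neumann[of "1 - w"] wn by simp
  also have "\<dots> \<le> 9"
  proof -
    have "norm (1 - w) \<le> 9 * (1 - norm (1 - w))" using wn by simp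
    then show ?thesis using wn by (simp add: pos_divide_le_eq)
  qed
  finally have cw: "norm (cinv w - 1) \<le> 9" by simp
  have "cinv w = 1 - a2" using cinv[OF ia2] unfolding w_def by (intro cinv_eq) auto
  then have "norm (1 - a2 - 1) \<le> 9" using cw by simp
  then have "norm a2 \<le> 9" by simp
  then show False using na2 a2s by simp
qed


lemma hard:
  fixes h :: "'a::unital_cstar_algebra"
  assumes sa: "adj h = h" and rho: "0 \<le> \<rho>" and sp: "\<And>z. z \<in> cspectrum h \<Longrightarrow> cmod z \<le> \<rho>"
  shows "norm h \<le> \<rho>"
proof (rule ccontr)
  assume "\<not> norm h \<le> \<rho>"
  then have hr: "\<rho> < norm h" by simp
  define R where "R = 2 / (norm h + \<rho>)"
  have Rp: "0 < R" unfolding R_def using hr rho by simp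
  have inv: "invertible_elem (1 - scaleC \<mu> h)" if m: "cmod \<mu> \<le> R" for \<mu>
  proof (cases "\<mu> = 0")
    case True
    then show ?thesis by (simp add: invertibleI[of 1 1])
  next
    case False
    have "1 / R < cmod (1/\<mu>) \<or> 1 / R = cmod (1/\<mu>) \<or> 1/R > cmod (1/\<mu>)" by linarith
    have c: "cmod (1/\<mu>) \<ge> 1 / R" using m False Rp by (simp add: norm_divide field_simps)
    have "1 / R > \<rho>" unfolding R_def using hr rho by (simp add: field_simps)
    then have "1/\<mu> \<notin> cspectrum h" using sp c by fastforce
    then have i: "invertible_elem (h - scaleC (1/\<mu>) 1)" unfolding cspectrum_def by simp
    have eq: "1 - scaleC \<mu> h = scaleC (-\<mu>) (h - scaleC (1/\<mu>) 1)"
      using False by (simp add: scaleC_diff_right scaleC_scaleC scaleC_minus_left)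
    show ?thesis unfolding eq using False i by (intro invertible_scaleC) auto
  qed
  have "R * norm h \<le> 1" by (rule boot[OF sa Rp inv])
  moreover have "R * norm h > 1" unfolding R_def using hr rho by (simp add: field_simps)
  ultimately show False by simp
qed

lemma pos_sa: "cpositive a \<Longrightarrow> adj a = a" unfolding cpositive_def by simp

lemma pos_spec: "cpositive a \<Longrightarrow> z \<in> cspectrum a \<Longrightarrow> \<exists>r\<ge>0. z = complex_of_real r"
  unfolding cpositive_def by auto

lemma P1:
  fixes a :: "'a::unital_cstar_algebra"
  assumes pa: "cpositive a"
  shows "norm (scaleR (norm a) 1 - a) \<le> norm a"
proof (rule hard)
  show "adj (scaleR (norm a) 1 - a) = scaleR (norm a) 1 - a"
    using pos_sa[OF pa] by (simp add: adj_diff adj_scaleR)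
  show "0 \<le> norm a" by simp
  fix z assume "z \<in> cspectrum (scaleR (norm a) 1 - a)"
  then have "complex_of_real (norm a) - z \<in> cspectrum a" by (simp add: spec_shift)
  moreover from this obtain r where r: "r \<ge> 0" "complex_of_real (norm a) - z = complex_of_real r"
    using pos_spec[OF pa] by blast
  ultimately have "cmod (complex_of_real r) \<le> norm a" using spec_bound by metis
  then have "r \<le> norm a" using r by simp
  moreover have ze: "z = complex_of_real (norm a - r)" using r by (simp add: algebra_simps)
  have "cmod z = \<bar>norm a - r\<bar>" unfolding ze by (simp only: norm_of_real)
  ultimately show "cmod z \<le> norm a" using r by simp
qed

lemma P2:
  fixes c :: "'a::unital_cstar_algebra"
  assumes sa: "adj c = c" and n: "norm (scaleR u 1 - c) \<le> u"
  shows "cpositive c"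
  unfolding cpositive_def
proof (intro conjI sa subsetI)
  fix z assume z: "z \<in> cspectrum c"
  have "Im z = 0" by (rule spec_real[OF sa z])
  then have zr: "z = complex_of_real (Re z)" by (simp add: complex_eq_iff)
  have "complex_of_real u - (complex_of_real u - z) \<in> cspectrum c" using z by simp
  then have "complex_of_real u - z \<in> cspectrum (scaleR u 1 - c)" by (simp only: spec_shift)
  then have "cmod (complex_of_real u - z) \<le> u" using spec_bound n by (metis order_trans)
  then have "cmod (complex_of_real (u - Re z)) \<le> u" by (subst (asm) zr) (simp)
  then have "\<bar>u - Re z\<bar> \<le> u" by (simp only: norm_of_real)
  then have "Re z \<ge> 0" by linarith
  then show "z \<in> complex_of_real ` {0..}" using zr by force
qed

lemma P3:
  fixes a b :: "'a::unital_cstar_algebra"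
  assumes pa: "cpositive a" and pb: "cpositive b"
  shows "cpositive (a + b)"
proof (rule P2)
  show "adj (a + b) = a + b" using pos_sa[OF pa] pos_sa[OF pb] by (simp add: adj_add)
  have "scaleR (norm a + norm b) 1 - (a + b) = (scaleR (norm a) 1 - a) + (scaleR (norm b) 1 - b)"
    by (simp add: algebra_simps scaleR_add_left)
  then have "norm (scaleR (norm a + norm b) 1 - (a + b)) \<le> norm (scaleR (norm a) 1 - a) + norm (scaleR (norm b) 1 - b)"
    by (metis norm_triangle_ineq)
  also have "\<dots> \<le> norm a + norm b" using P1[OF pa] P1[OF pb] by simp
  finally show "norm (scaleR (norm a + norm b) 1 - (a + b)) \<le> norm a + norm b" .
qed

lemma F1:
  fixes a b :: "'a::unital_cstar_algebra"
  assumes pa: "cpositive a" and ab: "a \<preceq>\<^sub>C b"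
  shows "norm a \<le> norm b"
proof -
  have pd: "cpositive (b - a)" using ab unfolding cle_def .
  have pb: "cpositive b" using P3[OF pa pd] by simp
  define t where "t = norm b"
  have p1: "cpositive (scaleR t 1 - b)"
  proof (rule P2)
    show "adj (scaleR t 1 - b) = scaleR t 1 - b" using pos_sa[OF pb] by (simp add: adj_diff adj_scaleR)
    show "norm (scaleR t 1 - (scaleR t 1 - b)) \<le> t" unfolding t_def by simp
  qed
  have p2: "cpositive (scaleR t 1 - a)" using P3[OF p1 pd] by simp
  show ?thesis unfolding t_def[symmetric]
  proof (rule hard)
    show "adj a = a" by (rule pos_sa[OF pa])
    show "0 \<le> t" unfolding t_def by simp
    fix z assume z: "z \<in> cspectrum a"
    obtain r where r: "r \<ge> 0" "z = complex_of_real r" using pos_spec[OF pa z] by blast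
    have "complex_of_real t - (complex_of_real t - z) \<in> cspectrum a" using z by simp
    then have "complex_of_real t - z \<in> cspectrum (scaleR t 1 - a)" by (simp only: spec_shift)
    then obtain s where s: "s \<ge> 0" "complex_of_real t - z = complex_of_real s" using pos_spec[OF p2] by blast
    then have "t - r = s" using r by (metis of_real_diff of_real_eq_iff)
    then show "cmod z \<le> t" using r s by simp
  qed
qed


lemma metric_facts:
  fixes d :: "'x \<Rightarrow> 'x \<Rightarrow> 'a::unital_cstar_algebra"
  assumes metric: "cstar_metric d"
  shows "norm (d x y) = 0 \<longleftrightarrow> x = y" and "norm (d x y) = norm (d y x)"
    and "norm (d x y) \<le> norm (d x z) + norm (d z y)"
proof -
  have m: "\<And>x y. cpositive (d x y)" "\<And>x y. d x y = 0 \<longleftrightarrow> x = y" "\<And>x y. d x y = d y x"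
    "\<And>x y z. d x y \<preceq>\<^sub>C d x z + d z y"
    using metric unfolding cstar_metric_def by blast+
  show "norm (d x y) = 0 \<longleftrightarrow> x = y" using m(2) by simp
  show "norm (d x y) = norm (d y x)" using m(3) by simp
  have "norm (d x y) \<le> norm (d x z + d z y)" by (rule F1[OF m(1) m(4)])
  also have "\<dots> \<le> norm (d x z) + norm (d z y)" by (rule norm_triangle_ineq)
  finally show "norm (d x y) \<le> norm (d x z) + norm (d z y)" .
qed

lemma contr_bound:
  fixes d :: "'x \<Rightarrow> 'x \<Rightarrow> 'a::unital_cstar_algebra"
  assumes metric: "cstar_metric d"
    and contr: "\<And>x y n. n \<ge> 1 \<Longrightarrow>
         d ((T ^^ n) x) ((T ^^ n) y) \<preceq>\<^sub>C (adj (q x y)) ^ n * \<delta> x y * (q x y) ^ n"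
    and n: "n \<ge> 1"
  shows "norm (d ((T ^^ n) x) ((T ^^ n) y)) \<le> norm (\<delta> x y) * (norm (q x y) ^ 2) ^ n"
proof -
  have p: "cpositive (d a b)" for a b using metric unfolding cstar_metric_def by blast
  have "norm (d ((T ^^ n) x) ((T ^^ n) y)) \<le> norm ((adj (q x y)) ^ n * \<delta> x y * (q x y) ^ n)"
    by (rule F1[OF p contr[OF n]])
  also have "\<dots> \<le> norm ((adj (q x y)) ^ n) * norm (\<delta> x y) * norm ((q x y) ^ n)"
    by (rule order_trans[OF norm_mult_ineq mult_right_mono[OF norm_mult_ineq norm_ge_zero]])
  also have "\<dots> \<le> norm (q x y) ^ n * norm (\<delta> x y) * norm (q x y) ^ n"
  proof -
    have a1: "norm ((adj (q x y)) ^ n) \<le> norm (q x y) ^ n"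
      using norm_power_ineq[of "adj (q x y)" n] norm_adj[of "q x y"] by simp
    have a2: "norm ((q x y) ^ n) \<le> norm (q x y) ^ n" by (rule norm_power_ineq)
    show ?thesis
      by (rule mult_mono[OF mult_right_mono[OF a1 norm_ge_zero] a2]) auto
  qed
  also have "\<dots> = norm (\<delta> x y) * (norm (q x y) ^ 2) ^ n"
    by (simp only: power2_eq_square power_mult_distrib mult_ac)
  finally show ?thesis .
qed

lemma fix_pow: "T u = u \<Longrightarrow> (T ^^ n) u = u"
  by (induction n) auto


theorem theorem3p6:
  fixes d :: "'x \<Rightarrow> 'x \<Rightarrow> 'a::unital_cstar_algebra"
    and T :: "'x \<Rightarrow> 'x"
    and q :: "'x \<Rightarrow> 'x \<Rightarrow> 'a"
    and \<delta> :: "'x \<Rightarrow> 'x \<Rightarrow> 'a"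
  assumes metric: "cstar_metric d"
    and complete: "ccomplete d"
    and q_norm: "\<And>x y. norm (q x y) < 1"
    and \<delta>_pos: "\<And>x y. cpositive (\<delta> x y)"
    and contr: "\<And>x y n. n \<ge> 1 \<Longrightarrow>
         d ((T ^^ n) x) ((T ^^ n) y) \<preceq>\<^sub>C (adj (q x y)) ^ n * \<delta> x y * (q x y) ^ n"
  shows "orbitally_continuous d T \<longleftrightarrow> (\<exists>!u. T u = u)"
proof -
  define D where "D x y = norm (d x y)" for x y
  have D0: "D x y = 0 \<longleftrightarrow> x = y" for x y unfolding D_def by (rule metric_facts[OF metric])
  have Ds: "D x y = D y x" for x y unfolding D_def by (rule metric_facts[OF metric])
  have Dt: "D x y \<le> D x z + D z y" for x y z unfolding D_def by (rule metric_facts[OF metric])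
  have Dp: "0 \<le> D x y" for x y unfolding D_def by simp
  define K where "K x y = norm (q x y) ^ 2" for x y
  have K: "0 \<le> K x y" "K x y < 1" for x y unfolding K_def using q_norm[of x y]
    by (auto simp: power_less_one_iff)
  have CB: "D ((T ^^ n) x) ((T ^^ n) y) \<le> norm (\<delta> x y) * K x y ^ n" if "n \<ge> 1" for x y n
    unfolding D_def K_def by (rule contr_bound[OF metric contr that])
  have geo0: "(\<lambda>n. c * K x y ^ n) \<longlonglongrightarrow> 0" for c x y
    using K[of x y] by (intro tendsto_mult_right_zero LIMSEQ_power_zero) simp
  have uniq: "u = v" if "T u = u" "T v = v" for u v
  proof -
    have "D u v \<le> 0"
    proof (rule LIMSEQ_le_const[OF geo0[of "norm (\<delta> u v)" u v]])
      show "\<exists>N. \<forall>n\<ge>N. D u v \<le> norm (\<delta> u v) * K u v ^ n"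
        using CB[of _ u v] fix_pow[of T u] fix_pow[of T v] that by (intro exI[of _ 1]) auto
    qed
    then show ?thesis using D0 Dp[of u v] by (metis order.antisym)
  qed
  show ?thesis
  proof
    assume oc: "orbitally_continuous d T"
    define x0 :: 'x where "x0 = undefined"
    define s where "s n = (T ^^ n) x0" for n
    define k where "k = K x0 (T x0)"
    define C where "C = max (norm (\<delta> x0 (T x0))) (D (s 0) (s 1))"
    have k: "0 \<le> k" "k < 1" using K k_def by auto
    have C0: "0 \<le> C" unfolding C_def by (simp add: Dp le_max_iff_disj)
    have step: "D (s n) (s (Suc n)) \<le> C * k ^ n" for n
    proof (cases "n = 0")
      case True then show ?thesis unfolding C_def by simp
    next
      case False
      have "s (Suc n) = (T ^^ n) (T x0)" unfolding s_def by (simp add: funpow_swap1)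
      then have "D (s n) (s (Suc n)) \<le> norm (\<delta> x0 (T x0)) * k ^ n"
        using CB[of n x0 "T x0"] False unfolding s_def k_def by simp
      also have "\<dots> \<le> C * k ^ n" unfolding C_def using k by (intro mult_right_mono) auto
      finally show ?thesis .
    qed
    have chain: "D (s n) (s (n + j)) \<le> C * k ^ n * (\<Sum>i<j. k ^ i)" for n j
    proof (induction j)
      case 0 then show ?case using D0[of "s n" "s n"] by simp
    next
      case (Suc j)
      have "D (s n) (s (n + Suc j)) \<le> D (s n) (s (n + j)) + D (s (n + j)) (s (Suc (n + j)))"
        using Dt by simp
      also have "\<dots> \<le> C * k ^ n * (\<Sum>i<j. k ^ i) + C * k ^ (n + j)"
        using Suc step[of "n + j"] by simp
      also have "\<dots> = C * k ^ n * (\<Sum>i<Suc j. k ^ i)" by (simp add: algebra_simps power_add)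
      finally show ?case .
    qed
    have gs: "(\<Sum>i<j. k ^ i) \<le> 1 / (1 - k)" for j
    proof -
      have "(\<Sum>i<j. k ^ i) = (1 - k ^ j) / (1 - k)" using k by (simp add: sum_gp_strict)
      also have "\<dots> \<le> 1 / (1 - k)" using k by (intro divide_right_mono) auto
      finally show ?thesis .
    qed
    have bnd: "D (s n) (s m) \<le> C / (1 - k) * k ^ n" if nm: "n \<le> m" for n m
    proof -
      obtain j where m: "m = n + j" using le_Suc_ex[OF nm] by (elim exE)
      have "D (s n) (s m) \<le> C * k ^ n * (\<Sum>i<j. k ^ i)" using chain m by simp
      also have "\<dots> \<le> C * k ^ n * (1 / (1 - k))" using gs C0 k by (intro mult_left_mono) auto
      finally show ?thesis by simp
    qed
    have cs: "ccauchy d s"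
      unfolding ccauchy_def
    proof (intro allI impI)
      fix e :: real assume e: "0 < e"
      have "(\<lambda>n. C / (1 - k) * k ^ n) \<longlonglongrightarrow> 0"
        using k by (intro tendsto_mult_right_zero LIMSEQ_power_zero) simp
      then obtain N where N: "\<And>n. n \<ge> N \<Longrightarrow> norm (C / (1 - k) * k ^ n) < e"
        using e unfolding LIMSEQ_iff by auto
      have "norm (d (s n) (s m)) < e" if "n \<ge> N" "m \<ge> N" for n m
      proof (cases "n \<le> m")
        case True
        have "D (s n) (s m) \<le> C / (1 - k) * k ^ n" by (rule bnd[OF True])
        also have "\<dots> < e" using N[OF that(1)] C0 k by simp
        finally show ?thesis unfolding D_def .
      next
        case False
        have "D (s m) (s n) \<le> C / (1 - k) * k ^ m" using False by (intro bnd) simp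
        also have "\<dots> < e" using N[OF that(2)] C0 k by simp
        finally show ?thesis using Ds unfolding D_def by metis
      qed
      then show "\<exists>N. \<forall>n\<ge>N. \<forall>m\<ge>N. norm (d (s n) (s m)) < e" by blast
    qed
    obtain u where u: "cconverges d s u" using complete cs unfolding ccomplete_def by blast
    have su: "(\<lambda>n. D (s n) u) \<longlonglongrightarrow> 0" using u unfolding cconverges_def D_def .
    have "cconverges d (\<lambda>i. (T ^^ (i + 1)) x0) (T u)"
    proof -
      have H: "\<And>x (ns::nat\<Rightarrow>nat). strict_mono ns \<Longrightarrow> cconverges d (\<lambda>i. (T ^^ ns i) x) u \<Longrightarrow>
        cconverges d (\<lambda>i. (T ^^ (ns i + 1)) x) (T u)"
        using oc unfolding orbitally_continuous_def orbitally_continuous_at_def by blast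
      have sm: "strict_mono (\<lambda>i::nat. i)" by (rule strict_monoI) simp
      show ?thesis using H[OF sm, of x0] u unfolding s_def by simp
    qed
    then have sTu: "(\<lambda>n. D (s (Suc n)) (T u)) \<longlonglongrightarrow> 0" unfolding cconverges_def D_def s_def by simp
    have su1: "(\<lambda>n. D (s (Suc n)) u) \<longlonglongrightarrow> 0" using su by (rule LIMSEQ_Suc)
    have L: "(\<lambda>n. D (s (Suc n)) u + D (s (Suc n)) (T u)) \<longlonglongrightarrow> 0 + 0"
      by (intro tendsto_add su1 sTu)
    have E: "\<exists>N. \<forall>n\<ge>N. D u (T u) \<le> D (s (Suc n)) u + D (s (Suc n)) (T u)"
      using Dt Ds by (metis)
    have "D u (T u) \<le> 0 + 0" by (rule LIMSEQ_le_const[OF L E])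
    then have "D u (T u) \<le> 0" by simp
    then have "T u = u" using D0 Dp[of u "T u"] by (metis order.antisym)
    then show "\<exists>!u. T u = u" using uniq by blast
  next
    assume "\<exists>!u. T u = u"
    then obtain u where fu: "T u = u" by blast
    show "orbitally_continuous d T"
      unfolding orbitally_continuous_def orbitally_continuous_at_def
    proof (intro allI impI)
      fix w x and ns :: "nat \<Rightarrow> nat"
      assume sm: "strict_mono ns" and cw: "cconverges d (\<lambda>i. (T ^^ ns i) x) w"
      define g where "g n = D ((T ^^ n) x) u" for n
      have g: "g \<longlonglongrightarrow> 0"
      proof (rule tendsto_sandwich[OF _ _ tendsto_const geo0[of "norm (\<delta> x u)" x u]])
        show "\<forall>\<^sub>F n in sequentially. 0 \<le> g n" unfolding g_def using Dp by simp
        show "\<forall>\<^sub>F n in sequentially. g n \<le> norm (\<delta> x u) * K x u ^ n"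
          unfolding g_def eventually_sequentially
          using CB[of _ x u] fix_pow[of T u, OF fu] by (intro exI[of _ 1]) auto
      qed
      have g1: "(\<lambda>i. g (ns i)) \<longlonglongrightarrow> 0" using LIMSEQ_subseq_LIMSEQ[OF g sm] by (simp add: comp_def)
      have g2: "(\<lambda>i. g (ns i + 1)) \<longlonglongrightarrow> 0"
        using LIMSEQ_subseq_LIMSEQ[OF LIMSEQ_Suc[OF g] sm] by (simp add: comp_def)
      have cw': "(\<lambda>i. D ((T ^^ ns i) x) w) \<longlonglongrightarrow> 0" using cw unfolding cconverges_def D_def .
      have L: "(\<lambda>i. D ((T ^^ ns i) x) w + g (ns i)) \<longlonglongrightarrow> 0 + 0" by (intro tendsto_add cw' g1)
      have E: "\<exists>N. \<forall>n\<ge>N. D w u \<le> D ((T ^^ ns n) x) w + g (ns n)"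
          unfolding g_def using Dt Ds by metis
      have "D w u \<le> 0 + 0" by (rule LIMSEQ_le_const[OF L E])
      then have "D w u \<le> 0" by simp
      then have "w = u" using D0 Dp[of w u] by (metis order.antisym)
      then show "cconverges d (\<lambda>i. (T ^^ (ns i + 1)) x) (T w)"
        using g2 fu unfolding cconverges_def g_def D_def by simp
    qed
  qed
qed


end
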